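(* Let $\lambda>0$, $p\in\mathbb{N}$, and let $f\in C^p\left[0,\frac12\lambda^{-1/2}\right]$ be real-valued. Write $\max$ for the maximum over $\left[0,\frac12\lambda^{-1/2}\right]$. Then at least one of the following inequalities holds: $$\max|f'|\le4^{p+\frac12}\lambda^{\frac12}\max|f|,\qquad\text{or}\qquad \max|f'|\le\left(\frac{\max|f^{(p)}|}{\max|f|}\right)^{\frac1p}4^{p-\frac12}\max|f|.$$ *)

theory Defs
  imports "HOL-Analysis.Analysis"
begin

text \<open>D 0, D 1, ..., D p are f and its successive derivatives on S (one-sided at
  endpoints, i.e. derivatives within S), all continuous on S: f is of class C^p on S.\<close>
definition Cp_on :: "nat \<Rightarrow> real set \<Rightarrow> (nat \<Rightarrow> real \<Rightarrow> real) \<Rightarrow> bool" where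
  "Cp_on p S D \<longleftrightarrow>
     (\<forall>k<p. \<forall>x\<in>S. (D k has_real_derivative D (Suc k) x) (at x within S)) \<and>
     (\<forall>k\<le>p. continuous_on S (D k))"

definition max_abs_on :: "real set \<Rightarrow> (real \<Rightarrow> real) \<Rightarrow> real" where
  "max_abs_on S g = Sup ((\<lambda>x. \<bar>g x\<bar>) ` S)"

end

theory Submission
  imports Defs
begin

lemma mvt_le:
  fixes g g' :: "real \<Rightarrow> real"
  assumes "u \<le> v" "\<And>s. s \<in> {u..v} \<Longrightarrow> (g has_real_derivative g' s) (at s within {u..v})"
    "\<And>s. s \<in> {u..v} \<Longrightarrow> g' s \<le> K"
  shows "g v - g u \<le> K * (v - u)"
proof -
  have "\<exists>x\<in>{u..v}. g v - g u = (\<lambda>h. g' x * h) (v - u)"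
    by (rule mvt_very_simple[OF assms(1)]) (use assms(2) in \<open>auto simp: has_field_derivative_def\<close>)
  then obtain x where x: "x \<in> {u..v}" "g v - g u = g' x * (v - u)" by auto
  show ?thesis unfolding x(2) using assms(3)[OF x(1)] assms(1) by (intro mult_right_mono) auto
qed

lemma mvt_abs:
  fixes g g' :: "real \<Rightarrow> real"
  assumes "u \<le> v" "\<And>s. s \<in> {u..v} \<Longrightarrow> (g has_real_derivative g' s) (at s within {u..v})"
    "\<And>s. s \<in> {u..v} \<Longrightarrow> \<bar>g' s\<bar> \<le> K"
  shows "\<bar>g v - g u\<bar> \<le> K * (v - u)"
proof -
  have "g v - g u \<le> K * (v - u)"
  proof (rule mvt_le[OF assms(1,2)])
    fix s assume "s \<in> {u..v}"
    from assms(3)[OF this] show "g' s \<le> K" by linarith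
  qed
  moreover have "(\<lambda>s. - g s) v - (\<lambda>s. - g s) u \<le> K * (v - u)"
    by (rule mvt_le[OF assms(1), where g'="\<lambda>s. - g' s"])
      (use assms(2,3) in \<open>force intro: derivative_eq_intros\<close>)+
  ultimately show ?thesis by auto
qed

lemma taylor2:
  fixes D0 D1 D2 :: "real \<Rightarrow> real"
  assumes uv: "u \<le> v"
    and d0: "\<And>s. s \<in> {u..v} \<Longrightarrow> (D0 has_real_derivative D1 s) (at s within {u..v})"
    and d1: "\<And>s. s \<in> {u..v} \<Longrightarrow> (D1 has_real_derivative D2 s) (at s within {u..v})"
    and K: "\<And>s. s \<in> {u..v} \<Longrightarrow> \<bar>D2 s\<bar> \<le> K"
  shows "\<bar>D0 v - D0 u - D1 u * (v - u)\<bar> \<le> K * ((v - u) * (v - u)) / 2"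
    and "\<bar>D0 u - D0 v - D1 v * (u - v)\<bar> \<le> K * ((v - u) * (v - u)) / 2"
proof -
  have dd1: "(D1 has_real_derivative D2 s) (at s within {a..b})"
    if "s \<in> {a..b}" "u \<le> a" "b \<le> v" for s a b
    by (rule has_field_derivative_subset[OF d1]) (use that in auto)
  have L: "\<bar>D1 s - D1 u\<bar> \<le> K * (s - u)" if "s \<in> {u..v}" for s
    by (rule mvt_abs) (use that in \<open>auto intro!: dd1 K\<close>)
  have R: "\<bar>D1 v - D1 s\<bar> \<le> K * (v - s)" if "s \<in> {u..v}" for s
    by (rule mvt_abs) (use that in \<open>auto intro!: dd1 K\<close>)
  have "(\<lambda>s. D0 s - D1 u * s - K / 2 * ((s - u) * (s - u))) v
        - (\<lambda>s. D0 s - D1 u * s - K / 2 * ((s - u) * (s - u))) u \<le> 0 * (v - u)"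
  proof (rule mvt_le[OF uv])
    fix s assume s: "s \<in> {u..v}"
    show "((\<lambda>s. D0 s - D1 u * s - K / 2 * ((s - u) * (s - u))) has_real_derivative
        D1 s - D1 u - K * (s - u)) (at s within {u..v})"
      by (rule derivative_eq_intros d0[OF s] refl)+ (simp add: algebra_simps)
    show "D1 s - D1 u - K * (s - u) \<le> 0" using L[OF s] by linarith
  qed
  moreover have "(\<lambda>s. - (D0 s - D1 u * s + K / 2 * ((s - u) * (s - u)))) v
        - (\<lambda>s. - (D0 s - D1 u * s + K / 2 * ((s - u) * (s - u)))) u \<le> 0 * (v - u)"
  proof (rule mvt_le[OF uv])
    fix s assume s: "s \<in> {u..v}"
    show "((\<lambda>s. - (D0 s - D1 u * s + K / 2 * ((s - u) * (s - u)))) has_real_derivative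
        - (D1 s - D1 u + K * (s - u))) (at s within {u..v})"
      by (rule derivative_eq_intros d0[OF s] refl)+ (simp add: algebra_simps)
    show "- (D1 s - D1 u + K * (s - u)) \<le> 0" using L[OF s] by linarith
  qed
  ultimately show "\<bar>D0 v - D0 u - D1 u * (v - u)\<bar> \<le> K * ((v - u) * (v - u)) / 2"
    unfolding abs_le_iff by (simp add: algebra_simps; linarith)
  have "(\<lambda>s. D0 s - D1 v * s + K / 2 * ((v - s) * (v - s))) v
        - (\<lambda>s. D0 s - D1 v * s + K / 2 * ((v - s) * (v - s))) u \<le> 0 * (v - u)"
  proof (rule mvt_le[OF uv])
    fix s assume s: "s \<in> {u..v}"
    show "((\<lambda>s. D0 s - D1 v * s + K / 2 * ((v - s) * (v - s))) has_real_derivative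
        D1 s - D1 v - K * (v - s)) (at s within {u..v})"
      by (rule derivative_eq_intros d0[OF s] refl)+ (simp add: algebra_simps)
    show "D1 s - D1 v - K * (v - s) \<le> 0" using R[OF s] by linarith
  qed
  moreover have "(\<lambda>s. - (D0 s - D1 v * s - K / 2 * ((v - s) * (v - s)))) v
        - (\<lambda>s. - (D0 s - D1 v * s - K / 2 * ((v - s) * (v - s)))) u \<le> 0 * (v - u)"
  proof (rule mvt_le[OF uv])
    fix s assume s: "s \<in> {u..v}"
    show "((\<lambda>s. - (D0 s - D1 v * s - K / 2 * ((v - s) * (v - s)))) has_real_derivative
        - (D1 s - D1 v + K * (v - s))) (at s within {u..v})"
      by (rule derivative_eq_intros d0[OF s] refl)+ (simp add: algebra_simps)
    show "- (D1 s - D1 v + K * (v - s)) \<le> 0" using R[OF s] by linarith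
  qed
  ultimately show "\<bar>D0 u - D0 v - D1 v * (u - v)\<bar> \<le> K * ((v - u) * (v - u)) / 2"
    unfolding abs_le_iff by (simp add: algebra_simps; linarith)
qed

lemma mabs_ge:
  assumes "continuous_on S g" "compact S" "x \<in> S"
  shows "\<bar>g x\<bar> \<le> max_abs_on S g"
proof -
  have "compact ((\<lambda>x. \<bar>g x\<bar>) ` S)"
    by (intro compact_continuous_image continuous_intros assms)
  then have "bdd_above ((\<lambda>x. \<bar>g x\<bar>) ` S)"
    by (intro bounded_imp_bdd_above compact_imp_bounded)
  then show ?thesis unfolding max_abs_on_def by (rule cSUP_upper[OF assms(3)])
qed

lemma mabs_le:
  assumes "S \<noteq> {}" "\<And>x. x \<in> S \<Longrightarrow> \<bar>g x\<bar> \<le> c"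
  shows "max_abs_on S g \<le> c"
  unfolding max_abs_on_def by (rule cSup_least) (use assms in auto)

lemma landau2:
  fixes D0 D1 D2 :: "real \<Rightarrow> real"
  assumes cd: "c < d" and x: "x \<in> {c..d}"
    and d0: "\<And>s. s \<in> {c..d} \<Longrightarrow> (D0 has_real_derivative D1 s) (at s within {c..d})"
    and d1: "\<And>s. s \<in> {c..d} \<Longrightarrow> (D1 has_real_derivative D2 s) (at s within {c..d})"
    and K0: "\<And>s. s \<in> {c..d} \<Longrightarrow> \<bar>D0 s\<bar> \<le> K0"
    and K2: "\<And>s. s \<in> {c..d} \<Longrightarrow> \<bar>D2 s\<bar> \<le> K2"
  shows "\<bar>D1 x\<bar> \<le> 2 * K0 / (d - c) + (d - c) / 2 * K2"
proof -
  have sub: "(D has_real_derivative E s) (at s within {u..v})"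
    if "\<And>s. s \<in> {c..d} \<Longrightarrow> (D has_real_derivative E s) (at s within {c..d})"
      "s \<in> {u..v}" "c \<le> u" "v \<le> d" for D E s u v
    by (rule has_field_derivative_subset[OF that(1)]) (use that in auto)
  have E1: "\<bar>D0 d - D0 x - D1 x * (d - x)\<bar> \<le> K2 * ((d - x) * (d - x)) / 2"
    by (rule taylor2(1)) (use x in \<open>auto intro!: sub[OF d0] sub[OF d1] K2\<close>)
  have E2: "\<bar>D0 c - D0 x - D1 x * (c - x)\<bar> \<le> K2 * ((x - c) * (x - c)) / 2"
    by (rule taylor2(2)) (use x in \<open>auto intro!: sub[OF d0] sub[OF d1] K2\<close>)
  have k2: "0 \<le> K2" using K2[OF x] by linarith
  have sq: "(d - x) * (d - x) + (x - c) * (x - c) \<le> (d - c) * (d - c)"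
  proof -
    have "0 \<le> (d - x) * (x - c)" using x by (intro mult_nonneg_nonneg) auto
    then show ?thesis by (simp add: algebra_simps)
  qed
  have eq: "D1 x * (d - c) = (D0 d - D0 c) - (D0 d - D0 x - D1 x * (d - x)) + (D0 c - D0 x - D1 x * (c - x))"
    by (simp add: algebra_simps)
  then have "\<bar>D1 x\<bar> * (d - c) \<le> \<bar>D0 d\<bar> + \<bar>D0 c\<bar> + K2 * ((d - x) * (d - x)) / 2 + K2 * ((x - c) * (x - c)) / 2"
  proof -
    have tri: "\<bar>P - Q - e1 + e2\<bar> \<le> \<bar>P\<bar> + \<bar>Q\<bar> + \<bar>e1\<bar> + \<bar>e2\<bar>" for P Q e1 e2 :: real
      by arith
    have "\<bar>D1 x\<bar> * (d - c) = \<bar>D1 x * (d - c)\<bar>" using cd by (simp add: abs_mult)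
    also have "\<dots> \<le> \<bar>D0 d\<bar> + \<bar>D0 c\<bar> + \<bar>D0 d - D0 x - D1 x * (d - x)\<bar> + \<bar>D0 c - D0 x - D1 x * (c - x)\<bar>"
      unfolding eq by (rule tri)
    finally show ?thesis using E1 E2 by linarith
  qed
  also have "\<dots> \<le> 2 * K0 + K2 * ((d - c) * (d - c)) / 2"
  proof -
    have "\<bar>D0 c\<bar> \<le> K0" "\<bar>D0 d\<bar> \<le> K0" using K0 cd by auto
    moreover have "K2 * ((d - x) * (d - x)) + K2 * ((x - c) * (x - c)) \<le> K2 * ((d - c) * (d - c))"
      using mult_left_mono[OF sq k2] by (simp only: distrib_left)
    ultimately show ?thesis by linarith
  qed
  finally have "\<bar>D1 x\<bar> * (d - c) \<le> 2 * K0 + K2 * ((d - c) * (d - c)) / 2" .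
  then show ?thesis using cd by (simp add: field_simps)
qed

lemma Cp_shift: "Cp_on (Suc p) S D \<Longrightarrow> Cp_on p S (\<lambda>k. D (Suc k))"
  unfolding Cp_on_def by auto

lemma claim:
  assumes "2 \<le> p"
  shows "\<exists>B\<ge>0. B * 2^p \<le> 2 \<and> (\<forall>a b D x K0 Kp. a < b \<longrightarrow> Cp_on p {a..b} D \<longrightarrow> x \<in> {a..b} \<longrightarrow>
     (\<forall>y\<in>{a..b}. \<bar>D 0 y\<bar> \<le> K0 \<and> \<bar>D p y\<bar> \<le> Kp) \<longrightarrow>
     \<bar>D 1 x\<bar> \<le> 2 * 4^(p-2) * K0 / (b - a) + B * (b - a)^(p-1) * Kp)"
  using assms
proof (induction p rule: nat_induct_at_least)
  case base
  show ?case
  proof (intro exI[of _ "1/2"] conjI allI impI)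
    fix a b :: real and D x K0 Kp
    assume ab: "a < b" and C: "Cp_on 2 {a..b} D" and x: "x \<in> {a..b}"
      and K: "\<forall>y\<in>{a..b}. \<bar>D 0 y\<bar> \<le> K0 \<and> \<bar>D 2 y\<bar> \<le> Kp"
    have d0: "(D 0 has_real_derivative D 1 s) (at s within {a..b})" if "s \<in> {a..b}" for s
      using C that unfolding Cp_on_def by (metis One_nat_def zero_less_numeral)
    have d1: "(D 1 has_real_derivative D 2 s) (at s within {a..b})" if "s \<in> {a..b}" for s
      using C that unfolding Cp_on_def by (metis Suc_1 lessI)
    have "\<bar>D 1 x\<bar> \<le> 2 * K0 / (b - a) + (b - a) / 2 * Kp"
      by (rule landau2[OF ab x d0 d1]) (use K in auto)
    then show "\<bar>D 1 x\<bar> \<le> 2 * 4 ^ (2 - 2) * K0 / (b - a) + 1 / 2 * (b - a) ^ (2 - 1) * Kp"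
      by simp
  qed auto
next
  case (Suc p)
  from Suc.IH obtain B where B: "B \<ge> 0" "B * 2^p \<le> 2" and
    H: "\<And>a b D x K0 Kp. a < b \<Longrightarrow> Cp_on p {a..b} D \<Longrightarrow> x \<in> {a..b} \<Longrightarrow>
     (\<forall>y\<in>{a..b}. \<bar>D 0 y\<bar> \<le> K0 \<and> \<bar>D p y\<bar> \<le> Kp) \<Longrightarrow>
     \<bar>D 1 x\<bar> \<le> 2 * 4^(p-2) * K0 / (b - a) + B * (b - a)^(p-1) * Kp"
    by blast
  define A :: real where "A = 2 * 4^(p-2)"
  have A2: "A \<ge> 2" unfolding A_def by simp
  show ?case
  proof (intro exI[of _ "B/A"] conjI allI impI)
    show "B / A \<ge> 0" using B A2 by simp
    have "B / A * 2 ^ Suc p = 2 * (B * 2^p) / A" by simp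
    also have "\<dots> \<le> 2 * 2 / A" using B A2 by (intro divide_right_mono) auto
    also have "\<dots> \<le> 2" using A2 by (simp add: field_simps)
    finally show "B / A * 2 ^ Suc p \<le> 2" .
    fix a b :: real and D x K0 Kp
    assume ab: "a < b" and C: "Cp_on (Suc p) {a..b} D" and x: "x \<in> {a..b}"
      and K: "\<forall>y\<in>{a..b}. \<bar>D 0 y\<bar> \<le> K0 \<and> \<bar>D (Suc p) y\<bar> \<le> Kp"
    define h where "h = b - a"
    have h0: "h > 0" using ab h_def by simp
    define M1 where "M1 = max_abs_on {a..b} (D 1)"
    have d0: "(D 0 has_real_derivative D 1 s) (at s within {a..b})" if "s \<in> {a..b}" for s
      using C that unfolding Cp_on_def by (metis One_nat_def zero_less_Suc)
    have d1: "(D 1 has_real_derivative D 2 s) (at s within {a..b})" if "s \<in> {a..b}" for s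
    proof -
      have "(D 1 has_real_derivative D (Suc 1) s) (at s within {a..b})"
        using C that Suc.hyps unfolding Cp_on_def by auto
      then show ?thesis by (simp only: Suc_1)
    qed
    have c1: "continuous_on {a..b} (D 1)"
      using C Suc.hyps unfolding Cp_on_def by auto
    have M1ge: "\<bar>D 1 y\<bar> \<le> M1" if "y \<in> {a..b}" for y
      unfolding M1_def by (rule mabs_ge[OF c1 compact_Icc that])
    define K2 where "K2 = A * M1 / h + B * h^(p-1) * Kp"
    have K2: "\<bar>D 2 s\<bar> \<le> K2" if "s \<in> {a..b}" for s
    proof -
      have "\<bar>(\<lambda>k. D (Suc k)) 1 s\<bar> \<le> 2 * 4^(p-2) * M1 / (b - a) + B * (b - a)^(p-1) * Kp"
        by (rule H[OF ab Cp_shift[OF C] that]) (use M1ge K in auto)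
      then show ?thesis unfolding K2_def A_def h_def by (simp add: numeral_2_eq_2)
    qed
    define h' where "h' = h / A"
    have h'0: "h' > 0" and h'h: "h' \<le> h" using h0 A2 unfolding h'_def by (auto simp: field_simps)
    have bound: "\<bar>D 1 y\<bar> \<le> 2 * A * K0 / h + M1 / 2 + B * h^p * Kp / (2 * A)" if y: "y \<in> {a..b}" for y
    proof -
      define c where "c = min y (b - h')"
      have sub: "{c..c+h'} \<subseteq> {a..b}" using y h'h unfolding c_def h_def by auto
      have yc: "y \<in> {c..c+h'}" using y h'0 unfolding c_def by auto
      have "\<bar>D 1 y\<bar> \<le> 2 * K0 / (c + h' - c) + (c + h' - c) / 2 * K2"
      proof (rule landau2[where ?D0.0="D 0" and ?D1.0="D 1" and ?D2.0="D 2", OF _ yc])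
        fix s assume s: "s \<in> {c..c+h'}"
        then have s': "s \<in> {a..b}" using sub by auto
        show "(D 0 has_real_derivative D 1 s) (at s within {c..c+h'})"
          by (rule has_field_derivative_subset[OF d0[OF s'] sub])
        show "(D 1 has_real_derivative D 2 s) (at s within {c..c+h'})"
          by (rule has_field_derivative_subset[OF d1[OF s'] sub])
        show "\<bar>D 0 s\<bar> \<le> K0" using K s' by auto
        show "\<bar>D 2 s\<bar> \<le> K2" using K2 s' by auto
      qed (use h'0 in auto)
      also have "\<dots> = 2 * A * K0 / h + M1 / 2 + B * (h^(p-1) * h) * Kp / (2 * A)"
        unfolding K2_def h'_def using h0 A2 by (simp add: field_simps)
      also have "h^(p-1) * h = h^p" using power_Suc2[of h "p-1"] Suc.hyps by simp
      finally show ?thesis .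
    qed
    have "max_abs_on {a..b} (D 1) \<le> 2 * A * K0 / h + M1 / 2 + B * h^p * Kp / (2 * A)"
      by (rule mabs_le) (use ab bound in auto)
    then have "M1 \<le> 2 * A * K0 / h + M1 / 2 + B * h^p * Kp / (2 * A)"
      by (simp add: M1_def)
    then have "M1 \<le> 4 * A * K0 / h + B / A * h^p * Kp" by (simp add: field_simps)
    moreover have "4 * A = 2 * 4 ^ (Suc p - 2)"
    proof -
      have "Suc p - 2 = Suc (p - 2)" using Suc.hyps by simp
      then show ?thesis unfolding A_def by simp
    qed
    ultimately show "\<bar>D 1 x\<bar> \<le> 2 * 4 ^ (Suc p - 2) * K0 / (b - a) + B / A * (b - a) ^ (Suc p - 1) * Kp"
      using M1ge[OF x] unfolding h_def by simp
  qed
qed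

lemma Cp_sub: "Cp_on p S D \<Longrightarrow> T \<subseteq> S \<Longrightarrow> Cp_on p T D"
  unfolding Cp_on_def by (auto intro: has_field_derivative_subset continuous_on_subset)

lemma mainL:
  fixes L :: real and D :: "nat \<Rightarrow> real \<Rightarrow> real"
  assumes L: "L > 0" and p: "p \<ge> 1" and C: "Cp_on p {0..L} D"
    and M0_def: "M0 = max_abs_on {0..L} (D 0)"
    and M1_def: "M1 = max_abs_on {0..L} (D 1)"
    and Mp_def: "Mp = max_abs_on {0..L} (D p)"
  shows "M1 \<le> 4^p * M0 / L \<or> M1 \<le> (Mp / M0) powr (1 / real p) * (4^p / 2) * M0"
proof -
  have cont: "continuous_on {0..L} (D k)" if "k \<le> p" for k
    using C that unfolding Cp_on_def by auto
  have der: "(D k has_real_derivative D (Suc k) y) (at y within {0..L})" if "k < p" "y \<in> {0..L}" for k y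
    using C that unfolding Cp_on_def by auto
  have ge0: "\<bar>D 0 y\<bar> \<le> M0" if "y \<in> {0..L}" for y
    unfolding M0_def by (rule mabs_ge[OF cont compact_Icc that]) simp
  have ge1: "\<bar>D 1 y\<bar> \<le> M1" if "y \<in> {0..L}" for y
    unfolding M1_def by (rule mabs_ge[OF cont compact_Icc that]) (use p in simp)
  have gep: "\<bar>D p y\<bar> \<le> Mp" if "y \<in> {0..L}" for y
    unfolding Mp_def by (rule mabs_ge[OF cont compact_Icc that]) simp
  have y0: "(0::real) \<in> {0..L}" using L by simp
  have M0nn: "M0 \<ge> 0" using ge0[OF y0] by linarith
  have M1nn: "M1 \<ge> 0" using ge1[OF y0] by linarith
  have Mpnn: "Mp \<ge> 0" using gep[OF y0] by linarith
  show ?thesis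
  proof (cases "M0 = 0")
    case True
    have z: "D 1 y = 0" if y: "y \<in> {0..L}" for y
    proof -
      have D0z: "D 0 x = 0" if "x \<in> {0..L}" for x using ge0[OF that] True by simp
      have a: "(D 0 has_real_derivative D 1 y) (at y within {0..L})"
        using der[of 0 y] p y by simp
      have b: "(D 0 has_real_derivative 0) (at y within {0..L})"
        by (rule has_field_derivative_transform_within[where f="\<lambda>_. 0" and d=1])
          (use y D0z in auto)
      show ?thesis
        using vector_derivative_unique_within_closed_interval[of 0 L y "D 0" "D 1 y" 0] a b L y
        by (simp add: has_real_derivative_iff_has_vector_derivative)
    qed
    have "M1 \<le> 0" unfolding M1_def by (rule mabs_le) (use z L in auto)
    then show ?thesis using True by simp
  next
    case False
    then have M0p: "M0 > 0" using M0nn by simp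
    show ?thesis
    proof (cases "p = 1")
      case True
      have "M1 \<le> (M1 / M0) * 2 * M0" using M0p M1nn by simp
      then show ?thesis using True M0p M1nn Mp_def M1_def by simp
    next
      case False
      then have p2: "p \<ge> 2" using p by simp
      define A :: real where "A = 2 * 4^(p-2)"
      from claim[OF p2] obtain B where B: "B \<ge> 0" "B * 2^p \<le> 2" and
        H: "\<And>a b D x K0 Kp. a < b \<Longrightarrow> Cp_on p {a..b} D \<Longrightarrow> x \<in> {a..b} \<Longrightarrow>
         (\<forall>y\<in>{a..b}. \<bar>D 0 y\<bar> \<le> K0 \<and> \<bar>D p y\<bar> \<le> Kp) \<Longrightarrow>
         \<bar>D 1 x\<bar> \<le> 2 * 4^(p-2) * K0 / (b - a) + B * (b - a)^(p-1) * Kp"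
        by blast
      have A4: "A + 2 \<le> 4^p"
      proof -
        have e: "2 + (p-2) = p" using p2 by simp
        have "(4::real)^p = 4^(2 + (p-2))" by (simp only: e)
        also have "\<dots> = 4^2 * 4^(p-2)" by (rule power_add)
        finally have h16: "(4::real)^p = 16 * 4^(p-2)" by simp
        moreover have "(1::real) \<le> 4^(p-2)" by simp
        ultimately show ?thesis unfolding A_def h16 by linarith
      qed
      have bnd: "M1 \<le> A * M0 / h + B * h^(p-1) * Mp" if h: "0 < h" "h \<le> L" for h
        unfolding M1_def
      proof (rule mabs_le)
        fix y assume y: "y \<in> {0..L}"
        define c where "c = min y (L - h)"
        have sub: "{c..c+h} \<subseteq> {0..L}" using y h unfolding c_def by auto
        have yc: "y \<in> {c..c+h}" using y h unfolding c_def by auto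
        have "\<bar>D 1 y\<bar> \<le> 2 * 4^(p-2) * M0 / (c + h - c) + B * (c + h - c)^(p-1) * Mp"
          by (rule H[OF _ Cp_sub[OF C sub] yc]) (use h sub ge0 gep in auto)
        then show "\<bar>D 1 y\<bar> \<le> A * M0 / h + B * h^(p-1) * Mp" unfolding A_def by simp
      qed (use L in simp)
      define r where "r = (Mp / M0) powr (1 / real p)"
      have rnn: "r \<ge> 0" unfolding r_def by simp
      have rp: "r^p * M0 = Mp"
      proof (cases "Mp = 0")
        case True then show ?thesis unfolding r_def using p by simp
      next
        case False
        then have "Mp / M0 > 0" using Mpnn M0p by simp
        then have xp: "Mp / M0 > 0" .
        have "r^p = r powr (real p)" using rnn p by (simp add: powr_realpow')
        also have "\<dots> = (Mp / M0) powr (1 / real p * real p)" unfolding r_def by (simp add: powr_powr)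
        also have "\<dots> = Mp / M0" using p xp Mpnn M0p by simp
        finally have "r^p = Mp / M0" .
        then show ?thesis using M0p by simp
      qed
      show ?thesis
      proof (cases "r * L \<le> 2")
        case True
        have rl: "(r * L)^p \<le> 2^p" using True rnn L by (intro power_mono) auto
        have Lp: "L^p = L^(p-1) * L" using power_Suc2[of L "p-1"] p by simp
        have e1: "L^(p-1) * Mp = (r*L)^p * M0 / L"
          unfolding rp[symmetric] power_mult_distrib Lp using L by simp
        have "B * (r*L)^p \<le> B * 2^p" using rl B by (intro mult_left_mono) auto
        then have "B * (r*L)^p \<le> 2" using B by linarith
        then have "B * (r*L)^p * M0 / L \<le> 2 * M0 / L" using M0p L
          by (intro divide_right_mono mult_right_mono) auto
        then have "B * L^(p-1) * Mp \<le> 2 * M0 / L" using e1 by (simp add: mult.assoc)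
        moreover have "M1 \<le> A * M0 / L + B * L^(p-1) * Mp" using bnd[of L] L by simp
        ultimately have "M1 \<le> (A + 2) * M0 / L" by (simp add: add_divide_distrib distrib_right)
        also have "\<dots> \<le> 4^p * M0 / L" using A4 M0p L by (intro divide_right_mono mult_right_mono) auto
        finally show ?thesis by simp
      next
        case False
        then have r0: "r > 0" using rnn L by (cases "r = 0") auto
        define h where "h = 2 / r"
        have h0: "h > 0" and hL: "h \<le> L" using r0 False unfolding h_def by (auto simp: field_simps)
        have b: "M1 \<le> A * M0 / h + B * h^(p-1) * Mp" by (rule bnd[OF h0 hL])
        have rp': "r^p = r^(p-1) * r" using power_Suc2[of r "p-1"] p by simp
        have "h^(p-1) * r^(p-1) = 2^(p-1)"
          unfolding h_def power_mult_distrib[symmetric] using r0 by simp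
        then have e2: "h^(p-1) * Mp = 2^(p-1) * r * M0"
          unfolding rp[symmetric] rp' by (simp add: mult.assoc[symmetric])
        have "B * 2^(p-1) \<le> 1"
        proof -
          have "(2::real)^p = 2 * 2^(p-1)" using power_Suc[of "2::real" "p-1"] p by simp
          then show ?thesis using B by simp
        qed
        then have "B * 2^(p-1) * (r * M0) \<le> 1 * (r * M0)" using r0 M0p
          by (intro mult_right_mono) auto
        then have t2: "B * h^(p-1) * Mp \<le> r * M0" using e2 by (simp add: mult.assoc)
        have t1: "A * M0 / h = A / 2 * (r * M0)" unfolding h_def using r0 by simp
        have "M1 \<le> (A + 2) / 2 * (r * M0)" using b t1 t2 by (simp add: field_simps)
        also have "\<dots> \<le> 4^p / 2 * (r * M0)" using A4 r0 M0p by (intro mult_right_mono) auto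
        finally show ?thesis unfolding r_def[symmetric] by (simp add: mult_ac)
      qed
    qed
  qed
qed

theorem proposition4p5:
  fixes lam :: real and p :: nat and D :: "nat \<Rightarrow> real \<Rightarrow> real"
  assumes "lam > 0" and "p \<ge> 1"
    and "Cp_on p {0 .. (1/2) * lam powr (-1/2)} D"
  shows "max_abs_on {0 .. (1/2) * lam powr (-1/2)} (D 1)
           \<le> 4 powr (real p + 1/2) * lam powr (1/2) * max_abs_on {0 .. (1/2) * lam powr (-1/2)} (D 0)
       \<or> max_abs_on {0 .. (1/2) * lam powr (-1/2)} (D 1)
           \<le> (max_abs_on {0 .. (1/2) * lam powr (-1/2)} (D p)
               / max_abs_on {0 .. (1/2) * lam powr (-1/2)} (D 0)) powr (1 / real p)
             * 4 powr (real p - 1/2) * max_abs_on {0 .. (1/2) * lam powr (-1/2)} (D 0)"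
proof -
  define L where "L = (1/2) * lam powr (-1/2)"
  have L0: "L > 0" unfolding L_def using assms(1) by simp
  have m: "max_abs_on {0..L} (D 1) \<le> 4^p * max_abs_on {0..L} (D 0) / L \<or>
    max_abs_on {0..L} (D 1) \<le> (max_abs_on {0..L} (D p) / max_abs_on {0..L} (D 0)) powr (1 / real p)
      * (4^p / 2) * max_abs_on {0..L} (D 0)"
    by (rule mainL[OF L0 assms(2) assms(3)[folded L_def] refl refl refl])
  have sq4: "(4::real) powr (1/2) = 2" by (simp add: powr_half_sqrt)
  have lm: "lam powr (1/2) * lam powr (-1/2) = 1" using assms(1) by (simp add: powr_add[symmetric])
  have e1: "4 powr (real p + 1/2) * lam powr (1/2) = 4^p / L"
  proof -
    have "4 powr (real p + 1/2) = 4^p * 2" by (simp add: powr_add powr_realpow sq4)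
    then show ?thesis unfolding L_def using lm assms(1) by (simp add: field_simps)
  qed
  have e2: "4 powr (real p - 1/2) = 4^p / 2"
    by (simp add: powr_diff powr_realpow sq4)
  show ?thesis using m unfolding L_def[symmetric] e1 e2 by simp
qed

end
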